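(* Let $G=KB(H)$ for some triangle-free graph $H$. If $I$ is an independent set of $G$ with $|I|=n\ge 3$ such that $\left|\bigcap_{v\in I}N_G(v)\right|\ge 3$, then $\left|\bigcup_{v\in I}N_G(v)\right|>n$.
   Context: All graphs are finite and simple. A biclique of a graph $H$ is a set $P\subseteq V(H)$ such that the induced subgraph $H[P]$ is a complete bipartite graph with both parts nonempty, and $P$ is inclusion-maximal with this property. The biclique graph $KB(H)$ has the set of bicliques of $H$ as vertex set, two distinct bicliques being adjacent iff they intersect. $N_G(v)$ denotes the (open) neighbourhood of $v$ in $G$. *)

theory Defs
  imports Main
begin

definition simple_graph :: "'a set \<Rightarrow> ('a \<Rightarrow> 'a \<Rightarrow> bool) \<Rightarrow> bool" where
  "simple_graph V E \<longleftrightarrow> finite V \<and> (\<forall>x y. E x y \<longrightarrow> x \<in> V \<and> y \<in> V)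
     \<and> (\<forall>x y. E x y \<longrightarrow> E y x) \<and> (\<forall>x. \<not> E x x)"

definition triangle_free :: "'a set \<Rightarrow> ('a \<Rightarrow> 'a \<Rightarrow> bool) \<Rightarrow> bool" where
  "triangle_free V E \<longleftrightarrow> \<not> (\<exists>x\<in>V. \<exists>y\<in>V. \<exists>z\<in>V. E x y \<and> E y z \<and> E x z)"

definition complete_bipartite_set :: "'a set \<Rightarrow> ('a \<Rightarrow> 'a \<Rightarrow> bool) \<Rightarrow> 'a set \<Rightarrow> bool" where
  "complete_bipartite_set V E P \<longleftrightarrow> P \<subseteq> V \<and>
     (\<exists>A B. A \<noteq> {} \<and> B \<noteq> {} \<and> A \<inter> B = {} \<and> A \<union> B = P
        \<and> (\<forall>a\<in>A. \<forall>b\<in>B. E a b)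
        \<and> (\<forall>a\<in>A. \<forall>a'\<in>A. \<not> E a a')
        \<and> (\<forall>b\<in>B. \<forall>b'\<in>B. \<not> E b b'))"

definition biclique :: "'a set \<Rightarrow> ('a \<Rightarrow> 'a \<Rightarrow> bool) \<Rightarrow> 'a set \<Rightarrow> bool" where
  "biclique V E P \<longleftrightarrow> complete_bipartite_set V E P \<and>
     (\<forall>Q. complete_bipartite_set V E Q \<and> P \<subseteq> Q \<longrightarrow> Q = P)"

definition KB_vertices :: "'a set \<Rightarrow> ('a \<Rightarrow> 'a \<Rightarrow> bool) \<Rightarrow> 'a set set" where
  "KB_vertices V E = {P. biclique V E P}"

definition KB_adj :: "'a set \<Rightarrow> ('a \<Rightarrow> 'a \<Rightarrow> bool) \<Rightarrow> 'a set \<Rightarrow> 'a set \<Rightarrow> bool" where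
  "KB_adj V E P Q \<longleftrightarrow> biclique V E P \<and> biclique V E Q \<and> P \<noteq> Q \<and> P \<inter> Q \<noteq> {}"

definition nbhd :: "'b set \<Rightarrow> ('b \<Rightarrow> 'b \<Rightarrow> bool) \<Rightarrow> 'b \<Rightarrow> 'b set" where
  "nbhd W R v = {u \<in> W. R v u}"

definition independent_set :: "'b set \<Rightarrow> ('b \<Rightarrow> 'b \<Rightarrow> bool) \<Rightarrow> 'b set \<Rightarrow> bool" where
  "independent_set W R I \<longleftrightarrow> I \<subseteq> W \<and> (\<forall>u\<in>I. \<forall>v\<in>I. \<not> R u v)"

end

theory Submission imports Defs begin

definition cn :: "'a set \<Rightarrow> ('a \<Rightarrow> 'a \<Rightarrow> bool) \<Rightarrow> 'a set \<Rightarrow> 'a set" where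
  "cn V E S = {x\<in>V. \<forall>y\<in>S. E x y}"

definition star :: "'a set \<Rightarrow> ('a \<Rightarrow> 'a \<Rightarrow> bool) \<Rightarrow> 'a \<Rightarrow> 'a set" where
  "star V E v = nbhd V E v \<union> cn V E (nbhd V E v)"

locale tfg =
  fixes V :: "'a set" and E :: "'a \<Rightarrow> 'a \<Rightarrow> bool"
  assumes sg: "simple_graph V E" and tf: "triangle_free V E"
begin

lemma edgeV: "E x y \<Longrightarrow> x \<in> V \<and> y \<in> V"
  using sg unfolding simple_graph_def by blast
lemma esym: "E x y \<Longrightarrow> E y x"
  using sg unfolding simple_graph_def by blast
lemma irr: "\<not> E x x"
  using sg unfolding simple_graph_def by blast
lemma notri: "E x y \<Longrightarrow> E y z \<Longrightarrow> E x z \<Longrightarrow> False"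
  using tf edgeV unfolding triangle_free_def by blast

lemma parts:
  assumes "complete_bipartite_set V E Q" "v \<in> Q"
  obtains A B where "A \<noteq> {}" "B \<noteq> {}" "A \<inter> B = {}" "A \<union> B = Q"
    "\<forall>a\<in>A. \<forall>b\<in>B. E a b" "\<forall>a\<in>A. \<forall>a'\<in>A. \<not> E a a'" "\<forall>b\<in>B. \<forall>b'\<in>B. \<not> E b b'" "v \<in> A"
proof -
  from assms(1) obtain A B where h: "A \<noteq> {}" "B \<noteq> {}" "A \<inter> B = {}" "A \<union> B = Q"
    "\<forall>a\<in>A. \<forall>b\<in>B. E a b" "\<forall>a\<in>A. \<forall>a'\<in>A. \<not> E a a'" "\<forall>b\<in>B. \<forall>b'\<in>B. \<not> E b b'"
    unfolding complete_bipartite_set_def by blast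
  show ?thesis
  proof (cases "v \<in> A")
    case True then show ?thesis using h that by blast
  next
    case False
    then have "v \<in> B" using h assms(2) by blast
    moreover have "\<forall>a\<in>B. \<forall>b\<in>A. E a b" using h(5) esym by blast
    ultimately show ?thesis using h that[of B A] by blast
  qed
qed

lemma cbs_subV: "complete_bipartite_set V E Q \<Longrightarrow> Q \<subseteq> V"
  unfolding complete_bipartite_set_def by blast

lemma biclique_vertex:
  assumes "biclique V E P" "v \<in> P"
  shows "cn V E (nbhd V E v) \<subseteq> P" "\<exists>w\<in>P. E v w"
proof -
  have cb: "complete_bipartite_set V E P" using assms unfolding biclique_def by blast
  obtain A B where h: "A \<noteq> {}" "B \<noteq> {}" "A \<inter> B = {}" "A \<union> B = P"
    "\<forall>a\<in>A. \<forall>b\<in>B. E a b" "\<forall>a\<in>A. \<forall>a'\<in>A. \<not> E a a'" "\<forall>b\<in>B. \<forall>b'\<in>B. \<not> E b b'" "v \<in> A"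
    using parts[OF cb assms(2)] by blast
  have PV: "P \<subseteq> V" using cbs_subV[OF cb] .
  show "\<exists>w\<in>P. E v w" using h by blast
  show "cn V E (nbhd V E v) \<subseteq> P"
  proof
    fix x assume x: "x \<in> cn V E (nbhd V E v)"
    have BN: "B \<subseteq> nbhd V E v" using h PV unfolding nbhd_def by blast
    have xV: "x \<in> V" and xB: "\<forall>b\<in>B. E x b" using x BN unfolding cn_def by auto
    show "x \<in> P"
    proof (rule ccontr)
      assume xP: "x \<notin> P"
      have f0: "insert x P \<subseteq> V" using PV xV by blast
      have f3: "insert x A \<inter> B = {}" using h xP by blast
      have f4: "insert x A \<union> B = insert x P" using h by blast
      have f5: "\<forall>a\<in>insert x A. \<forall>b\<in>B. E a b" using h xB by blast
      have f7: "\<forall>a\<in>insert x A. \<forall>a'\<in>insert x A. \<not> E a a'"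
      proof (intro ballI)
        fix a a' assume a: "a \<in> insert x A" and a': "a' \<in> insert x A"
        obtain b where b: "b \<in> B" using h by blast
        have "E x c \<Longrightarrow> c \<in> A \<Longrightarrow> False" for c
          using notri[of x c b] h b xB by blast
        then show "\<not> E a a'" using a a' h irr esym by blast
      qed
      have "complete_bipartite_set V E (insert x P)"
        unfolding complete_bipartite_set_def
        apply (rule conjI, rule f0)
        apply (rule exI[of _ "insert x A"], rule exI[of _ B])
        using f3 f4 f5 f7 h by blast
      then have "insert x P = P" using assms(1) unfolding biclique_def by blast
      then show False using xP by blast
    qed
  qed
qed

lemma in_star: "v \<in> V \<Longrightarrow> v \<in> star V E v"
  unfolding star_def cn_def nbhd_def by auto

lemma nbhd_star: "nbhd V E v \<subseteq> star V E v"
  unfolding star_def by blast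

lemma star_biclique:
  assumes vV: "v \<in> V" and ne: "nbhd V E v \<noteq> {}"
  shows "biclique V E (star V E v)"
proof -
  let ?N = "nbhd V E v" and ?C = "cn V E (nbhd V E v)"
  have NV: "?N \<subseteq> V" unfolding nbhd_def by blast
  have CV: "?C \<subseteq> V" unfolding cn_def by blast
  have vC: "v \<in> ?C" using vV unfolding cn_def nbhd_def by auto
  have g0: "star V E v \<subseteq> V" using NV CV unfolding star_def by blast
  have g3: "?C \<inter> ?N = {}" using irr unfolding cn_def by blast
  have g4: "?C \<union> ?N = star V E v" unfolding star_def by blast
  have g5: "\<forall>a\<in>?C. \<forall>b\<in>?N. E a b" unfolding cn_def by blast
  have g6: "\<forall>a\<in>?C. \<forall>a'\<in>?C. \<not> E a a'"
  proof (intro ballI notI)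
    fix a a' assume "a \<in> ?C" "a' \<in> ?C" "E a a'"
    moreover obtain y where "y \<in> ?N" using ne by blast
    ultimately show False using notri[of a a' y] esym unfolding cn_def by blast
  qed
  have g7: "\<forall>b\<in>?N. \<forall>b'\<in>?N. \<not> E b b'"
  proof (intro ballI notI)
    fix b b' assume "b \<in> ?N" "b' \<in> ?N" "E b b'"
    then show False using notri[of v b b'] unfolding nbhd_def by blast
  qed
  have cb: "complete_bipartite_set V E (star V E v)"
    unfolding complete_bipartite_set_def
    apply (rule conjI, rule g0)
    apply (rule exI[of _ ?C], rule exI[of _ ?N])
    using g3 g4 g5 g6 g7 vC ne by blast
  show ?thesis unfolding biclique_def
  proof (intro conjI allI impI)
    show "complete_bipartite_set V E (star V E v)" by fact
    fix Q assume Q: "complete_bipartite_set V E Q \<and> star V E v \<subseteq> Q"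
    have vQ: "v \<in> Q" using Q in_star[OF vV] by blast
    obtain C D where h: "C \<noteq> {}" "D \<noteq> {}" "C \<inter> D = {}" "C \<union> D = Q"
      "\<forall>a\<in>C. \<forall>b\<in>D. E a b" "\<forall>a\<in>C. \<forall>a'\<in>C. \<not> E a a'" "\<forall>b\<in>D. \<forall>b'\<in>D. \<not> E b b'" "v \<in> C"
      using parts[of Q v] Q vQ by blast
    have QV: "Q \<subseteq> V" using Q cbs_subV by blast
    have "?N \<subseteq> Q" using Q nbhd_star by blast
    then have ND: "?N \<subseteq> D" using h unfolding nbhd_def by blast
    have DN: "D \<subseteq> ?N" using h QV unfolding nbhd_def by blast
    have "C \<subseteq> ?C" using h QV ND DN unfolding cn_def by blast
    then have "Q \<subseteq> star V E v" using h DN unfolding star_def by blast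
    then show "Q = star V E v" using Q by blast
  qed
qed

lemma star_distinct:
  assumes P: "biclique V E P" and Q: "biclique V E Q" and d: "P \<inter> Q = {}"
    and u: "u \<in> P" and v: "v \<in> Q"
  shows "star V E u \<noteq> star V E v"
proof
  assume eq: "star V E u = star V E v"
  have QV: "Q \<subseteq> V" using Q cbs_subV unfolding biclique_def by blast
  have cu: "cn V E (nbhd V E u) \<subseteq> P" using biclique_vertex[OF P u] by blast
  obtain w where w: "w \<in> Q" "E v w" using biclique_vertex[OF Q v] by blast
  have "v \<in> star V E u" using eq in_star v QV by blast
  then have "v \<in> nbhd V E u" using cu v d unfolding star_def by blast
  then have uv: "E u v" unfolding nbhd_def by blast
  have "w \<in> star V E u" using eq nbhd_star w QV unfolding nbhd_def by blast
  then have "w \<in> nbhd V E u" using cu w d unfolding star_def by blast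
  then have uw: "E u w" unfolding nbhd_def by blast
  show False using notri[OF uv w(2) uw] .
qed


lemma good_star:
  assumes "biclique V E P" "v \<in> P" "star V E v \<noteq> P"
  shows "star V E v \<in> nbhd (KB_vertices V E) (KB_adj V E) P"
proof -
  have vV: "v \<in> V" using assms cbs_subV unfolding biclique_def by blast
  have "nbhd V E v \<noteq> {}" using biclique_vertex(2)[OF assms(1,2)] edgeV unfolding nbhd_def by blast
  then have b: "biclique V E (star V E v)" using star_biclique vV by blast
  have "v \<in> star V E v \<inter> P" using in_star[OF vV] assms by blast
  then show ?thesis using b assms unfolding nbhd_def KB_vertices_def KB_adj_def by auto
qed

lemma good_exists:
  assumes P: "biclique V E P" and W: "biclique V E W" and "W \<noteq> P" "P \<inter> W \<noteq> {}"
  shows "\<exists>v\<in>P. star V E v \<noteq> P"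
proof (rule ccontr)
  assume "\<not> (\<exists>v\<in>P. star V E v \<noteq> P)"
  then have all: "\<forall>v\<in>P. nbhd V E v \<subseteq> P" using nbhd_star by blast
  obtain x where x: "x \<in> P" "x \<in> W" using assms by blast
  have cbW: "complete_bipartite_set V E W" using W unfolding biclique_def by blast
  obtain C D where h: "C \<noteq> {}" "D \<noteq> {}" "C \<inter> D = {}" "C \<union> D = W"
      "\<forall>a\<in>C. \<forall>b\<in>D. E a b" "\<forall>a\<in>C. \<forall>a'\<in>C. \<not> E a a'" "\<forall>b\<in>D. \<forall>b'\<in>D. \<not> E b b'" "x \<in> C"
    using parts[OF cbW x(2)] by blast
  have WV: "W \<subseteq> V" using cbs_subV[OF cbW] .
  have Nx: "nbhd V E x \<subseteq> P" using all x(1) by blast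
  have DP: "D \<subseteq> P"
  proof
    fix d assume d: "d \<in> D"
    then have "E x d" using h(5) h(8) by blast
    moreover have "d \<in> V" using d h(4) WV by blast
    ultimately have "d \<in> nbhd V E x" unfolding nbhd_def by blast
    then show "d \<in> P" using Nx by blast
  qed
  obtain d where d: "d \<in> D" using h by blast
  have Nd: "nbhd V E d \<subseteq> P" using all d DP by blast
  have "C \<subseteq> P"
  proof
    fix c assume c: "c \<in> C"
    then have "E d c" using h(5) d esym by blast
    moreover have "c \<in> V" using c h(4) WV by blast
    ultimately have "c \<in> nbhd V E d" unfolding nbhd_def by blast
    then show "c \<in> P" using Nd by blast
  qed
  then have "W \<subseteq> P" using DP h by blast
  moreover have "complete_bipartite_set V E P" using P unfolding biclique_def by blast
  ultimately have "P = W" using W unfolding biclique_def by blast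
  then show False using assms by blast
qed

end

theorem theorem4:
  fixes V :: "'a set" and E :: "'a \<Rightarrow> 'a \<Rightarrow> bool" and I :: "'a set set" and n :: nat
  assumes "simple_graph V E"
    and "triangle_free V E"
    and "independent_set (KB_vertices V E) (KB_adj V E) I"
    and "card I = n" and "n \<ge> 3"
    and "card (\<Inter>v\<in>I. nbhd (KB_vertices V E) (KB_adj V E) v) \<ge> 3"
  shows "card (\<Union>v\<in>I. nbhd (KB_vertices V E) (KB_adj V E) v) > n"
proof -
  interpret tfg V E using assms(1,2) by unfold_locales
  define KV where "KV = KB_vertices V E"
  define KA where "KA = KB_adj V E"
  define U where "U = (\<Union>v\<in>I. nbhd KV KA v)"
  define CN where "CN = (\<Inter>v\<in>I. nbhd KV KA v)"
  have bic: "\<And>P. P \<in> I \<Longrightarrow> biclique V E P"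
    using assms(3) unfolding independent_set_def KB_vertices_def by blast
  have disj: "P \<inter> Q = {}" if PQ: "P \<in> I" "Q \<in> I" "P \<noteq> Q" for P Q
  proof -
    have "\<not> KB_adj V E P Q" using assms(3) PQ unfolding independent_set_def by blast
    then show ?thesis using bic[OF PQ(1)] bic[OF PQ(2)] PQ(3) unfolding KB_adj_def by simp
  qed
  have Ine: "I \<noteq> {}" using assms(4,5) by auto
  have adjW: "biclique V E W \<and> W \<noteq> P \<and> P \<inter> W \<noteq> {}" if WP: "W \<in> CN" "P \<in> I" for W P
  proof -
    have "W \<in> nbhd KV KA P" using WP unfolding CN_def by blast
    then have "KB_adj V E P W" unfolding nbhd_def KA_def by simp
    then show ?thesis unfolding KB_adj_def by blast
  qed
  have WnotI: "\<And>W. W \<in> CN \<Longrightarrow> W \<notin> I"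
  proof
    fix W assume W: "W \<in> CN" "W \<in> I"
    obtain P where "P \<in> I" using Ine by blast
    then have "W \<in> nbhd KV KA P" using W unfolding CN_def by blast
    then have "KB_adj V E P W" unfolding nbhd_def KA_def by simp
    then show False using assms(3) W \<open>P \<in> I\<close> unfolding independent_set_def by blast
  qed
  have finU: "finite U"
  proof -
    have "U \<subseteq> Pow V" using cbs_subV unfolding U_def nbhd_def KV_def KB_vertices_def biclique_def by blast
    moreover have "finite V" using assms(1) unfolding simple_graph_def by blast
    ultimately show ?thesis using finite_subset by blast
  qed
  have finI: "finite I" using assms(4,5) card.infinite by fastforce
  define G where "G W = (\<forall>P\<in>I. \<exists>v\<in>P. star V E v \<noteq> P \<and> star V E v \<noteq> W)" for W
  have good: "n < card U" if W: "W \<in> CN" and gd0: "G W" for W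
  proof -
    have gd: "\<forall>P\<in>I. \<exists>v\<in>P. star V E v \<noteq> P \<and> star V E v \<noteq> W" using gd0 unfolding G_def .
    define g where "g P = (SOME v. v \<in> P \<and> star V E v \<noteq> P \<and> star V E v \<noteq> W)" for P
    have gP: "g P \<in> P \<and> star V E (g P) \<noteq> P \<and> star V E (g P) \<noteq> W" if "P \<in> I" for P
      unfolding g_def using someI_ex[of "\<lambda>v. v \<in> P \<and> star V E v \<noteq> P \<and> star V E v \<noteq> W"] gd that by blast
    define f where "f P = star V E (g P)" for P
    have fU: "f ` I \<subseteq> U"
    proof
      fix Z assume "Z \<in> f ` I"
      then obtain P where P: "P \<in> I" "Z = f P" by blast
      then have "Z \<in> nbhd KV KA P" using good_star[OF bic[OF P(1)]] gP[OF P(1)]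
        unfolding f_def KV_def KA_def by blast
      then show "Z \<in> U" using P unfolding U_def by blast
    qed
    have inj: "inj_on f I"
    proof (rule inj_onI, rule ccontr)
      fix P Q assume PQ: "P \<in> I" "Q \<in> I" "f P = f Q" "P \<noteq> Q"
      have "star V E (g P) \<noteq> star V E (g Q)"
        using star_distinct[OF bic[OF PQ(1)] bic[OF PQ(2)] disj[OF PQ(1,2,4)]] gP[OF PQ(1)] gP[OF PQ(2)] by blast
      then show False using PQ(3) unfolding f_def by simp
    qed
    have WU: "W \<in> U"
    proof -
      obtain P where P: "P \<in> I" using Ine by blast
      then have "W \<in> nbhd KV KA P" using W unfolding CN_def by blast
      then show ?thesis using P unfolding U_def by blast
    qed
    have Wf: "W \<notin> f ` I" using gP unfolding f_def by blast
    have "card (insert W (f ` I)) = Suc n"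
    proof -
      have "card (f ` I) = n" using card_image[OF inj] assms(4) by simp
      then show ?thesis using Wf finI by (simp add: card_insert_disjoint)
    qed
    moreover have "card (insert W (f ` I)) \<le> card U"
      using card_mono[OF finU] fU WU by blast
    ultimately show ?thesis by simp
  qed
  have bad: "\<exists>P\<in>I. \<exists>u\<in>P. star V E u = W \<and> (\<forall>v\<in>P. star V E v = P \<or> star V E v = W)"
    if W: "W \<in> CN" and ng0: "\<not> G W" for W
  proof -
    have ng: "\<not> (\<forall>P\<in>I. \<exists>v\<in>P. star V E v \<noteq> P \<and> star V E v \<noteq> W)" using ng0 unfolding G_def .
    obtain P where P: "P \<in> I" "\<forall>v\<in>P. star V E v = P \<or> star V E v = W" using ng by blast
    obtain v where "v \<in> P" "star V E v \<noteq> P"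
      using good_exists[OF bic[OF P(1)]] adjW[OF W P(1)] by blast
    then show ?thesis using P by blast
  qed
  have edge: "E u u'"
    if W': "W' \<in> CN" and P: "P \<in> I" and P': "P' \<in> I" and u: "u \<in> P" and u': "u' \<in> P'"
      and su: "star V E u = W" and su': "star V E u' = W'"
      and allP: "\<forall>v\<in>P. star V E v = P \<or> star V E v = W" and ne: "P \<noteq> P'" for W W' P P' u u'
  proof -
    have d: "P \<inter> P' = {}" using disj P P' ne by blast
    obtain z where z: "z \<in> P" "z \<in> W'" using adjW[OF W' P] by blast
    have zV: "z \<in> V" using z bic[OF P] cbs_subV unfolding biclique_def by blast
    have u'V: "u' \<in> V" using u' bic[OF P'] cbs_subV unfolding biclique_def by blast
    have c': "cn V E (nbhd V E u') \<subseteq> P'" using biclique_vertex(1)[OF bic[OF P'] u'] .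
    have c: "cn V E (nbhd V E u) \<subseteq> P" using biclique_vertex(1)[OF bic[OF P] u] .
    have "z \<in> nbhd V E u'" using z su' c' d unfolding star_def by blast
    then have "E u' z" unfolding nbhd_def by blast
    then have u'z: "u' \<in> nbhd V E z" using u'V esym unfolding nbhd_def by blast
    then have "u' \<in> star V E z" using nbhd_star by blast
    moreover have "star V E z = P \<or> star V E z = W" using allP z by blast
    ultimately have "u' \<in> star V E u" using u' d su by blast
    then have "u' \<in> nbhd V E u" using c u' d unfolding star_def by blast
    then show ?thesis unfolding nbhd_def by blast
  qed
  have c3: "3 \<le> card CN" using assms(6) unfolding CN_def KV_def KA_def .
  obtain T where T: "T \<subseteq> CN" "card T = 3"
    using obtain_subset_with_card_n[OF c3] by metis
  obtain W1 W2 W3 where T3: "T = {W1, W2, W3}" "W1 \<noteq> W2" "W2 \<noteq> W3" "W1 \<noteq> W3"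
    using T(2) unfolding card_3_iff by blast
  have Ws: "W1 \<in> CN" "W2 \<in> CN" "W3 \<in> CN" "W1 \<noteq> W2" "W2 \<noteq> W3" "W1 \<noteq> W3"
    using T(1) T3 by auto
  have goal: "n < card U \<Longrightarrow> ?thesis" unfolding U_def KV_def KA_def .
  show ?thesis
  proof (cases "G W1 \<or> G W2 \<or> G W3")
    case True
    then show ?thesis using good[OF Ws(1)] good[OF Ws(2)] good[OF Ws(3)] goal by blast
  next
    case False
    have ng: "\<not> G W1" "\<not> G W2" "\<not> G W3" using False by simp_all
    obtain P1 u1 where A1: "P1 \<in> I" "u1 \<in> P1" "star V E u1 = W1" "\<forall>v\<in>P1. star V E v = P1 \<or> star V E v = W1"
      using bad[OF Ws(1) ng(1)] by blast
    obtain P2 u2 where A2: "P2 \<in> I" "u2 \<in> P2" "star V E u2 = W2" "\<forall>v\<in>P2. star V E v = P2 \<or> star V E v = W2"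
      using bad[OF Ws(2) ng(2)] by blast
    obtain P3 u3 where A3: "P3 \<in> I" "u3 \<in> P3" "star V E u3 = W3" "\<forall>v\<in>P3. star V E v = P3 \<or> star V E v = W3"
      using bad[OF Ws(3) ng(3)] by blast
    have n12: "P1 \<noteq> P2" using A2 A1(4) Ws(4) WnotI[OF Ws(2)] by auto
    have n23: "P2 \<noteq> P3" using A3 A2(4) Ws(5) WnotI[OF Ws(3)] by auto
    have n13: "P1 \<noteq> P3" using A3 A1(4) Ws(6) WnotI[OF Ws(3)] by auto
    have e12: "E u1 u2" using edge[OF Ws(2) A1(1) A2(1) A1(2) A2(2) A1(3) A2(3) A1(4) n12] .
    have e23: "E u2 u3" using edge[OF Ws(3) A2(1) A3(1) A2(2) A3(2) A2(3) A3(3) A2(4) n23] .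
    have e13: "E u1 u3" using edge[OF Ws(3) A1(1) A3(1) A1(2) A3(2) A1(3) A3(3) A1(4) n13] .
    show ?thesis using notri[OF e12 e23 e13] by blast
  qed
qed

end
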